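(* Let $q$ be a prime power, $m\ge2$, $1\le k<n$, and let $X\in\mathbb{F}_{q^m}^{k \times (n-k)}$ be chosen uniformly at random. Then $$\Pr\big(\mathrm{rs}[\,I_k\mid X\,] \text{ is a generalized Gabidulin code}\big)\leq \sum_{\substack{0<s<m\\ \gcd(s,m)=1}}\Pr\big(X\in\mathcal G(s)\big) =\sum_{\substack{0<s<m\\ \gcd(s,m)=1}}\frac{|\mathcal G(s)|}{q^{mk(n-k)}} .$$
   Context: For $0<s<m$ with $\gcd(s,m)=1$, $\mathcal G(s):=\{X \in (\mathbb{F}_{q^m}\setminus \mathbb{F}_q)^{k\times (n-k)} \mid \mathrm{rk}(X^{(q^s)}-X)=1\}$, where $X^{(q^s)}$ is obtained by raising each entry of $X$ to the $q^s$-th power. $\mathrm{rs}$ denotes $\mathbb{F}_{q^m}$-row space. For $s$ coprime to $m$ and $g_1,\dots,g_n\in\mathbb{F}_{q^m}$ linearly independent over $\mathbb{F}_q$, the generalized Gabidulin code of dimension $k$ with parameter $s$ is the row space of the $k\times n$ matrix with $(i,j)$ entry $g_j^{q^{s(i-1)}}$; a generalized Gabidulin code is such a code for some such $s$ and $g_1,\dots,g_n$. *)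

theory Defs
  imports "HOL-Probability.Probability"
begin

text \<open>Matrices over a field are represented as functions nat \<Rightarrow> nat \<Rightarrow> 'a,
  zero outside the index range; vectors as functions nat \<Rightarrow> 'a.\<close>

definition mats :: "nat \<Rightarrow> nat \<Rightarrow> (nat \<Rightarrow> nat \<Rightarrow> 'a::zero) set" where
  "mats r c = {A. \<forall>i j. (r \<le> i \<or> c \<le> j) \<longrightarrow> A i j = 0}"

text \<open>The subfield F_q of F_{q^m}: the fixed points of the q-Frobenius.\<close>
definition subfield_q :: "nat \<Rightarrow> 'a::field set" where
  "subfield_q q = {x. x ^ q = x}"

definition rows_indep :: "(nat \<Rightarrow> nat \<Rightarrow> 'a::field) \<Rightarrow> nat \<Rightarrow> nat set \<Rightarrow> bool" where
  "rows_indep A c I = (\<forall>a. (\<forall>j<c. (\<Sum>i\<in>I. a i * A i j) = 0) \<longrightarrow> (\<forall>i\<in>I. a i = 0))"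

definition mat_rank :: "(nat \<Rightarrow> nat \<Rightarrow> 'a::field) \<Rightarrow> nat \<Rightarrow> nat \<Rightarrow> nat" where
  "mat_rank A r c = Max {card I | I. I \<subseteq> {..<r} \<and> rows_indep A c I}"

definition row_space :: "(nat \<Rightarrow> nat \<Rightarrow> 'a::field) \<Rightarrow> nat \<Rightarrow> nat \<Rightarrow> (nat \<Rightarrow> 'a) set" where
  "row_space A r c = {v. \<exists>a. v = (\<lambda>j. if j < c then (\<Sum>i<r. a i * A i j) else 0)}"

definition sys_mat :: "nat \<Rightarrow> nat \<Rightarrow> (nat \<Rightarrow> nat \<Rightarrow> 'a::field) \<Rightarrow> nat \<Rightarrow> nat \<Rightarrow> 'a" where
  "sys_mat k n X = (\<lambda>i j. if i < k \<and> j < n then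
       (if j < k then (if i = j then 1 else 0) else X i (j - k)) else 0)"

definition lin_indep_Fq :: "nat \<Rightarrow> nat \<Rightarrow> (nat \<Rightarrow> 'a::field) \<Rightarrow> bool" where
  "lin_indep_Fq q n g = (\<forall>c. (\<forall>j<n. c j \<in> subfield_q q) \<longrightarrow> (\<Sum>j<n. c j * g j) = 0
       \<longrightarrow> (\<forall>j<n. c j = 0))"

text \<open>Generalized Gabidulin generator matrix (0-indexed rows: entry g_j^(q^(s i))).\<close>
definition gab_mat :: "nat \<Rightarrow> nat \<Rightarrow> nat \<Rightarrow> nat \<Rightarrow> (nat \<Rightarrow> 'a::field) \<Rightarrow> nat \<Rightarrow> nat \<Rightarrow> 'a" where
  "gab_mat q s k n g = (\<lambda>i j. if i < k \<and> j < n then g j ^ (q ^ (s * i)) else 0)"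

definition is_gen_gabidulin :: "nat \<Rightarrow> nat \<Rightarrow> nat \<Rightarrow> nat \<Rightarrow> (nat \<Rightarrow> 'a::field) set \<Rightarrow> bool" where
  "is_gen_gabidulin q m k n C = (\<exists>s g. 0 < s \<and> s < m \<and> coprime s m \<and> lin_indep_Fq q n g
       \<and> C = row_space (gab_mat q s k n g) k n)"

definition G_set :: "nat \<Rightarrow> nat \<Rightarrow> nat \<Rightarrow> nat \<Rightarrow> (nat \<Rightarrow> nat \<Rightarrow> 'a::field) set" where
  "G_set q k l s = {X \<in> mats k l. (\<forall>i<k. \<forall>j<l. X i j \<notin> subfield_q q)
       \<and> mat_rank (\<lambda>i j. X i j ^ (q ^ s) - X i j) k l = 1}"

end

theory Submission
  imports Defs "HOL-Computational_Algebra.Primes"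
begin


lemma hom_basic:
  fixes \<phi> :: "'a::field \<Rightarrow> 'a"
  assumes add: "\<And>x y. \<phi> (x + y) = \<phi> x + \<phi> y" and mul: "\<And>x y. \<phi> (x*y) = \<phi> x * \<phi> y" and one: "\<phi> 1 = 1"
  shows "\<phi> 0 = 0" "\<phi> (- x) = - \<phi> x" "\<phi> (x - y) = \<phi> x - \<phi> y" "\<phi> (sum f A) = (\<Sum>i\<in>A. \<phi> (f i))"
    "x \<noteq> 0 \<Longrightarrow> \<phi> x \<noteq> 0"
proof -
  have "\<phi> 0 + \<phi> 0 = \<phi> 0 + 0" using add[of 0 0] by simp
  then show z: "\<phi> 0 = 0" by (simp only: add_left_cancel)
  have m: "\<phi> (- u) = - \<phi> u" for u
  proof -
    have "\<phi> u + \<phi> (- u) = 0" using add[of u "-u"] z by simp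
    then show ?thesis by (simp add: eq_neg_iff_add_eq_0 add.commute)
  qed
  then show "\<phi> (- x) = - \<phi> x" .
  show "\<phi> (x - y) = \<phi> x - \<phi> y" using add[of x "-y"] m[of y] by simp
  show "\<phi> (sum f A) = (\<Sum>i\<in>A. \<phi> (f i))"
    by (induction A rule: infinite_finite_induct) (auto simp: z add)
  show "x \<noteq> 0 \<Longrightarrow> \<phi> x \<noteq> 0"
    using mul[of x "inverse x"] one by auto
qed

lemma hom_funpow:
  fixes \<phi> :: "'a::field \<Rightarrow> 'a"
  assumes add: "\<And>x y. \<phi> (x + y) = \<phi> x + \<phi> y" and mul: "\<And>x y. \<phi> (x*y) = \<phi> x * \<phi> y" and one: "\<phi> 1 = 1"
  shows "(\<phi>^^t) (x + y) = (\<phi>^^t) x + (\<phi>^^t) y" "(\<phi>^^t) (x * y) = (\<phi>^^t) x * (\<phi>^^t) y" "(\<phi>^^t) 1 = 1"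
  by (induction t arbitrary: x y) (auto simp: add mul one)

lemma hom_funpow_all:
  fixes \<phi> :: "'a::field \<Rightarrow> 'a"
  assumes add: "\<And>x y. \<phi> (x + y) = \<phi> x + \<phi> y" and mul: "\<And>x y. \<phi> (x*y) = \<phi> x * \<phi> y" and one: "\<phi> 1 = 1"
  shows "(\<phi>^^t) 0 = 0" "(\<phi>^^t) (x - y) = (\<phi>^^t) x - (\<phi>^^t) y" 
    "(\<phi>^^t) (sum f A) = (\<Sum>i\<in>A. (\<phi>^^t) (f i))" "x \<noteq> 0 \<Longrightarrow> (\<phi>^^t) x \<noteq> 0"
    "\<phi> c = c \<Longrightarrow> (\<phi>^^t) c = c"
proof -
  note h = hom_funpow[OF assms]
  note b = hom_basic[of "\<phi>^^t", OF h]
  show "(\<phi>^^t) 0 = 0" "(\<phi>^^t) (x - y) = (\<phi>^^t) x - (\<phi>^^t) y" 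
    "(\<phi>^^t) (sum f A) = (\<Sum>i\<in>A. (\<phi>^^t) (f i))" "x \<noteq> 0 \<Longrightarrow> (\<phi>^^t) x \<noteq> 0"
    using b by auto
  show "\<phi> c = c \<Longrightarrow> (\<phi>^^t) c = c" by (induction t) auto
qed

lemma telescope_identity:
  fixes \<phi> :: "'a::field \<Rightarrow> 'a" and b :: "nat \<Rightarrow> 'a"
  shows "(\<Sum>t<n. b t * ((\<phi>^^t) y - y)) = (\<Sum>j<n. sum b {Suc j..<n} * ((\<phi>^^Suc j) y - (\<phi>^^j) y))"
proof (induction n)
  case 0 then show ?case by simp
next
  case (Suc n)
  have tel: "(\<Sum>j<n. (\<phi>^^Suc j) y - (\<phi>^^j) y) = (\<phi>^^n) y - y"
    using sum_lessThan_telescope[of "\<lambda>j. (\<phi>^^j) y" n] by simp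
  have "(\<Sum>j<Suc n. sum b {Suc j..<Suc n} * ((\<phi>^^Suc j) y - (\<phi>^^j) y))
      = (\<Sum>j<n. sum b {Suc j..<Suc n} * ((\<phi>^^Suc j) y - (\<phi>^^j) y))" by simp
  also have "\<dots> = (\<Sum>j<n. sum b {Suc j..<n} * ((\<phi>^^Suc j) y - (\<phi>^^j) y) + b n * ((\<phi>^^Suc j) y - (\<phi>^^j) y))"
    by (intro sum.cong refl) (simp add: sum.atLeastLessThan_Suc distrib_right)
  also have "\<dots> = (\<Sum>j<n. sum b {Suc j..<n} * ((\<phi>^^Suc j) y - (\<phi>^^j) y)) + b n * ((\<phi>^^n) y - y)"
    by (simp add: sum.distrib flip: sum_distrib_left tel)
  finally show ?case using Suc by simp
qed

lemma skew_indep: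
  fixes \<phi> :: "'a::field \<Rightarrow> 'a"
  assumes add: "\<And>x y. \<phi> (x + y) = \<phi> x + \<phi> y" and mul: "\<And>x y. \<phi> (x*y) = \<phi> x * \<phi> y" and one: "\<phi> 1 = 1"
  shows "(\<forall>c. (\<forall>j<d. \<phi> (c j) = c j) \<longrightarrow> (\<Sum>j<d. c j * h j) = 0 \<longrightarrow> (\<forall>j<d. c j = 0))
     \<Longrightarrow> (\<forall>j<d. (\<Sum>t<d. a t * (\<phi>^^t) (h j)) = 0) \<Longrightarrow> \<forall>t<d. a t = 0"
proof (induction d arbitrary: a h)
  case 0 then show ?case by simp
next
  case (Suc d)
  note hb = hom_basic[OF assms]
  note hf = hom_funpow[OF assms]
  note hfa = hom_funpow_all[OF assms]
  define w where "w = h 0"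
  have w0: "w \<noteq> 0"
  proof
    assume w00: "w = 0"
    define c0 where "c0 j = (if j = 0 then (1::'a) else 0)" for j :: nat
    have f1: "\<forall>j<Suc d. \<phi> (c0 j) = c0 j" using one hb(1) by (auto simp: c0_def)
    have f2: "(\<Sum>j<Suc d. c0 j * h j) = 0" using w00
      by (simp add: c0_def w_def sum.lessThan_Suc_shift del: sum.lessThan_Suc)
    have "\<forall>j<Suc d. c0 j = 0" using mp[OF mp[OF spec[OF Suc.prems(1), of c0] f1] f2] .
    then show False by (auto simp: c0_def)
  qed
  define u where "u j = h j / w" for j
  define b where "b t = a t * (\<phi>^^t) w" for t
  have hu: "h j = w * u j" for j using w0 by (simp add: u_def)
  have M0: "(\<Sum>t<Suc d. b t * (\<phi>^^t) (u j)) = 0" if "j < Suc d" for j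
  proof -
    have "(\<Sum>t<Suc d. b t * (\<phi>^^t) (u j)) = (\<Sum>t<Suc d. a t * (\<phi>^^t) (h j))"
      by (intro sum.cong refl) (simp add: b_def hu hf(2))
    then show ?thesis using Suc.prems(2) that by simp
  qed
  have u0: "u 0 = 1" using w0 by (simp add: u_def w_def)
  have sb: "(\<Sum>t<Suc d. b t) = 0" using M0[of 0] u0 hf(3) by simp
  define v where "v j = \<phi> (u (Suc j)) - u (Suc j)" for j
  define e where "e j = sum b {Suc j..<Suc d}" for j
  have key: "(\<Sum>t<Suc d. b t * (\<phi>^^t) y) - (\<Sum>t<Suc d. b t) * y = (\<Sum>j<d. e j * (\<phi>^^j) (\<phi> y - y))" for y
  proof -
    have "(\<Sum>t<Suc d. b t * (\<phi>^^t) y) - (\<Sum>t<Suc d. b t) * y = (\<Sum>t<Suc d. b t * ((\<phi>^^t) y - y))"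
      by (simp add: sum_subtractf sum_distrib_right right_diff_distrib del: sum.lessThan_Suc)
    also have "\<dots> = (\<Sum>j<Suc d. sum b {Suc j..<Suc d} * ((\<phi>^^Suc j) y - (\<phi>^^j) y))"
      by (rule telescope_identity)
    also have "\<dots> = (\<Sum>j<d. sum b {Suc j..<Suc d} * ((\<phi>^^Suc j) y - (\<phi>^^j) y))"
      by simp
    also have "\<dots> = (\<Sum>j<d. e j * (\<phi>^^j) (\<phi> y - y))"
      by (intro sum.cong refl) (simp add: e_def hfa(2) funpow_Suc_right del: funpow.simps)
    finally show ?thesis .
  qed
  have Nv: "\<forall>i<d. (\<Sum>j<d. e j * (\<phi>^^j) (v i)) = 0"
  proof (intro allI impI)
    fix i assume "i < d"
    have "(\<Sum>j<d. e j * (\<phi>^^j) (v i)) = (\<Sum>t<Suc d. b t * (\<phi>^^t) (u (Suc i))) - (\<Sum>t<Suc d. b t) * u (Suc i)"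
      using key[of "u (Suc i)"] by (simp add: v_def)
    also have "\<dots> = 0" using M0[of "Suc i"] \<open>i < d\<close> sb by simp
    finally show "(\<Sum>j<d. e j * (\<phi>^^j) (v i)) = 0" .
  qed
  have vind: "\<forall>c. (\<forall>j<d. \<phi> (c j) = c j) \<longrightarrow> (\<Sum>j<d. c j * v j) = 0 \<longrightarrow> (\<forall>j<d. c j = 0)"
  proof (rule allI, (rule impI)+)
    fix c assume cf: "\<forall>j<d. \<phi> (c j) = c j" and cs: "(\<Sum>j<d. c j * v j) = 0"
    define z where "z = (\<Sum>j<d. c j * u (Suc j))"
    have "\<phi> z = (\<Sum>j<d. c j * \<phi> (u (Suc j)))"
      unfolding z_def hb(4) by (intro sum.cong refl) (simp add: mul cf)
    then have "\<phi> z - z = (\<Sum>j<d. c j * v j)"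
      by (simp add: z_def v_def sum_subtractf right_diff_distrib)
    then have fz: "\<phi> z = z" using cs by simp
    define c' where "c' j = (if j = 0 then - z else c (j - 1))" for j
    have "\<forall>j<Suc d. \<phi> (c' j) = c' j" using cf fz hb(2) by (auto simp: c'_def)
    moreover have "(\<Sum>j<Suc d. c' j * h j) = 0"
    proof -
      have "(\<Sum>j<Suc d. c' j * h j) = - z * w + (\<Sum>j<d. c j * (w * u (Suc j)))"
        by (simp add: sum.lessThan_Suc_shift c'_def hu u0 del: sum.lessThan_Suc)
      also have "(\<Sum>j<d. c j * (w * u (Suc j))) = w * z"
        by (simp add: z_def sum_distrib_left mult_ac)
      finally show ?thesis by simp
    qed
    ultimately have "\<forall>j<Suc d. c' j = 0" using spec[OF Suc.prems(1), of c'] by blast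
    then show "\<forall>j<d. c j = 0" by (auto simp: c'_def)
  qed
  have e0: "\<forall>j<d. e j = 0" using Suc.IH[OF vind Nv] .
  have bS: "b (Suc j) = 0" if "j < d" for j
  proof -
    have "e j = b (Suc j) + sum b {Suc (Suc j)..<Suc d}"
      unfolding e_def by (rule sum.atLeast_Suc_lessThan) (use that in simp)
    moreover have "sum b {Suc (Suc j)..<Suc d} = 0"
    proof (cases "Suc j < d")
      case True then show ?thesis using e0 by (simp add: e_def)
    next
      case False then show ?thesis using that by simp
    qed
    ultimately show ?thesis using e0 that by simp
  qed
  have b0: "b 0 = 0" using sb bS by (simp add: sum.lessThan_Suc_shift del: sum.lessThan_Suc)
  have "b t = 0" if "t < Suc d" for t
    using that b0 bS by (cases t) auto
  then show ?case using hfa(4)[OF w0] by (auto simp: b_def)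
qed



lemma pow_iter:
  fixes x :: "'a::comm_ring_1"
  assumes "x ^ (q ^ s) = x"
  shows "x ^ (q ^ (s * a)) = x"
proof (induction a)
  case 0 then show ?case by simp
next
  case (Suc a)
  have "q ^ (s * Suc a) = q ^ (s * a) * q ^ s" by (simp add: power_add)
  then have "x ^ (q ^ (s * Suc a)) = (x ^ (q ^ (s * a))) ^ (q ^ s)"
    by (simp only: power_mult)
  then show ?case using Suc assms by simp
qed

lemma field_card_power:
  fixes x :: "'a::{field,finite}"
  shows "x ^ card (UNIV :: 'a set) = x"
proof (cases "x = 0")
  case True
  have "0 < card (UNIV :: 'a set)" by (rule finite_UNIV_card_ge_0) simp
  then show ?thesis using True by (simp add: zero_power)
next
  case False
  define U where "U = UNIV - {0::'a}"
  have fU: "finite U" by simp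
  have c: "card (UNIV :: 'a set) = Suc (card U)"
  proof -
    have "card U = card (UNIV :: 'a set) - 1" unfolding U_def by (rule card_Diff_singleton) simp_all
    moreover have "0 < card (UNIV :: 'a set)" by (rule finite_UNIV_card_ge_0) simp
    ultimately show ?thesis by linarith
  qed
  have e1: "(\<Prod>y\<in>U. x * y) = x ^ card U * (\<Prod>y\<in>U. y)"
    by (simp only: prod.distrib prod_constant)
  have e2: "(\<Prod>y\<in>U. x * y) = (\<Prod>y\<in>U. y)"
    by (rule prod.reindex_bij_witness[of _ "\<lambda>y. y / x" "\<lambda>y. x * y"]) (use False in \<open>auto simp: U_def\<close>)
  have e3: "(\<Prod>y\<in>U. y) \<noteq> 0" using fU by (simp add: U_def)
  have "x ^ card U = 1" using e1 e2 e3 by simp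
  then show ?thesis by (simp add: c)
qed

lemma ff_facts:
  fixes q m :: nat
  assumes p: "prime p" and e: "0 < e" and q: "q = p ^ e" and card: "card (UNIV :: 'a::{field,finite} set) = q ^ m"
  shows "\<And>x y :: 'a. (x + y) ^ (q ^ s) = x ^ (q ^ s) + y ^ (q ^ s)"
    and "\<And>x :: 'a. x ^ (q ^ m) = x"
proof -
  have cp: "CHAR('a) > 0" by (simp add: finite_imp_CHAR_pos)
  then have pc: "prime CHAR('a)" by (rule prime_CHAR_semidom)
  have "(\<Sum>y\<in>UNIV. (1::'a) + y) = (\<Sum>y\<in>UNIV. y)"
    by (rule sum.reindex_bij_witness[of _ "\<lambda>y. y - 1" "\<lambda>y. 1 + y"]) auto
  then have "of_nat (card (UNIV::'a set)) = (0::'a)" by (simp add: sum.distrib)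
  then have "of_nat (p ^ (e * m)) = (0::'a)" using card q by (simp add: power_mult)
  then have "of_nat p = (0::'a)" by (simp add: of_nat_power)
  then have "CHAR('a) dvd p" by (simp add: of_nat_eq_0_iff_char_dvd)
  then have cc: "CHAR('a) = p" using pc p by (simp add: primes_dvd_imp_eq)
  show "\<And>x y :: 'a. (x + y) ^ (q ^ s) = x ^ (q ^ s) + y ^ (q ^ s)"
    by (rule freshmans_dream'[where n = "e * s"]) (use pc cc q in \<open>auto simp: power_mult\<close>)
  show "\<And>x :: 'a. x ^ (q ^ m) = x"
    using field_card_power card by metis
qed

lemma fixed_iff:
  fixes x :: "'a::comm_ring_1"
  assumes all: "\<And>y::'a. y ^ (q ^ m) = y" and s: "0 < s" and cop: "coprime s m"
  shows "x ^ (q ^ s) = x \<longleftrightarrow> x ^ q = x"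
proof
  assume h: "x ^ (q ^ s) = x"
  obtain a b where ab: "s * a = m * b + gcd s m" using bezout_nat[of s m] s by auto
  then have ab': "s * a = m * b + 1" using cop by simp
  have q1: "q ^ (s * a) = q ^ (m * b) * q" by (simp add: ab' power_add)
  have "x = x ^ (q ^ (s * a))" using pow_iter[OF h] by simp
  also have "\<dots> = (x ^ (q ^ (m * b))) ^ q" unfolding q1 by (simp only: power_mult)
  also have "x ^ (q ^ (m * b)) = x" using pow_iter[of x q m b] all by simp
  finally show "x ^ q = x" by simp
next
  assume "x ^ q = x"
  then show "x ^ (q ^ s) = x" using pow_iter[of x q 1 s] by simp
qed



lemma sum_if_less:
  fixes f :: "nat \<Rightarrow> 'a::comm_monoid_add"
  assumes "k \<le> n"
  shows "(\<Sum>t<n. if t < k then f t else 0) = (\<Sum>t<k. f t)"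
proof -
  have "(\<Sum>t<n. if t < k then f t else 0) = sum f ({..<n} \<inter> {t. t < k})"
    by (simp add: sum.If_cases)
  also have "{..<n} \<inter> {t. t < k} = {..<k}" using assms by auto
  finally show ?thesis .
qed

lemma sum_delta_mult:
  assumes "finite A"
  shows "(\<Sum>x\<in>A. (if x = a then 1 else 0) * f x) = (if a \<in> A then f a else (0::'a::semiring_1))"
proof -
  have "(\<Sum>x\<in>A. (if x = a then 1 else 0) * f x) = (\<Sum>x\<in>A. if x = a then f x else 0)"
    by (intro sum.cong) auto
  then show ?thesis using assms by (simp add: sum.delta)
qed

lemma gab_imp_G:
  fixes q m k n s :: nat and X :: "nat \<Rightarrow> nat \<Rightarrow> 'a::{field,finite}"
  assumes p: "prime p" and e: "0 < e" and q: "q = p ^ e" and card: "CARD('a) = q ^ m"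
    and k1: "1 \<le> k" and kn: "k < n" and Xm: "X \<in> mats k (n - k)"
    and s0: "0 < s" and cop: "coprime s m" and gi: "lin_indep_Fq q n g"
    and rs: "row_space (sys_mat k n X) k n = row_space (gab_mat q s k n g) k n"
  shows "X \<in> G_set q k (n - k) s"
proof -
  define l where "l = n - k"
  have nkl: "n = k + l" using kn by (simp add: l_def)
  have l1: "1 \<le> l" using kn by (simp add: l_def)
  define \<phi> :: "'a \<Rightarrow> 'a" where "\<phi> x = x ^ (q ^ s)" for x
  note ff = ff_facts[OF p e q card]
  have add: "\<And>x y. \<phi> (x + y) = \<phi> x + \<phi> y" by (simp add: \<phi>_def ff(1))
  have mul: "\<And>x y. \<phi> (x * y) = \<phi> x * \<phi> y" by (simp add: \<phi>_def power_mult_distrib)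
  have one: "\<phi> 1 = 1" by (simp add: \<phi>_def)
  note hb = hom_basic[OF add mul one]
  note hfa = hom_funpow_all[OF add mul one]
  have fix_iff: "\<phi> x = x \<longleftrightarrow> x \<in> subfield_q q" for x
    unfolding \<phi>_def subfield_q_def using fixed_iff[OF ff(2) s0 cop] by simp
  have iter: "(\<phi>^^t) x = x ^ (q ^ (s * t))" for t x
  proof (induction t)
    case 0 then show ?case by simp
  next
    case (Suc t)
    have "(\<phi>^^Suc t) x = ((\<phi>^^t) x) ^ (q^s)" by (simp add: \<phi>_def)
    also have "\<dots> = (x ^ (q^(s*t))) ^ (q^s)" by (simp only: Suc.IH)
    also have "\<dots> = x ^ (q^(s*t) * q^s)" by (simp only: power_mult)
    also have "\<dots> = x ^ (q^(s * Suc t))" by (metis power_add mult_Suc_right mult.commute)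
    finally show ?case .
  qed
  \<comment> \<open>rows of the systematic matrix as linearized polynomials\<close>
  have "\<forall>i. \<exists>a. i < k \<longrightarrow> (\<forall>j<n. sys_mat k n X i j = (\<Sum>t<k. a t * (\<phi>^^t) (g j)))"
  proof (intro allI)
    fix i
    show "\<exists>a. i < k \<longrightarrow> (\<forall>j<n. sys_mat k n X i j = (\<Sum>t<k. a t * (\<phi>^^t) (g j)))"
    proof (cases "i < k")
      case True
      let ?v = "\<lambda>j. if j < n then sys_mat k n X i j else 0"
      have "?v \<in> row_space (sys_mat k n X) k n"
        unfolding row_space_def
        by (rule CollectI, rule exI[of _ "\<lambda>i'. if i' = i then 1 else 0"])
           (rule ext, subst sum_delta_mult[OF finite_lessThan], use True in simp)
      then have "?v \<in> row_space (gab_mat q s k n g) k n" using rs by simp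
      then obtain a where a: "?v = (\<lambda>j. if j < n then (\<Sum>t<k. a t * gab_mat q s k n g t j) else 0)"
        unfolding row_space_def by blast
      have "\<forall>j<n. sys_mat k n X i j = (\<Sum>t<k. a t * (\<phi>^^t) (g j))"
      proof (intro allI impI)
        fix j assume "j < n"
        have "sys_mat k n X i j = (\<Sum>t<k. a t * gab_mat q s k n g t j)"
          using fun_cong[OF a, of j] \<open>j < n\<close> by simp
        also have "\<dots> = (\<Sum>t<k. a t * (\<phi>^^t) (g j))"
          by (intro sum.cong refl) (use \<open>j < n\<close> in \<open>simp add: gab_mat_def iter\<close>)
        finally show "sys_mat k n X i j = (\<Sum>t<k. a t * (\<phi>^^t) (g j))" .
      qed
      then show ?thesis by blast
    qed simp
  qed
  then obtain A where A: "\<And>i j. i < k \<Longrightarrow> j < n \<Longrightarrow> sys_mat k n X i j = (\<Sum>t<k. A i t * (\<phi>^^t) (g j))"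
    by metis
  define P where "P i x = (\<Sum>t<k. A i t * (\<phi>^^t) x)" for i x
  have Pdiag: "P i (g j) = (if i = j then 1 else 0)" if "i < k" "j < k" for i j
    using A[of i j] that kn by (simp add: P_def sys_mat_def)
  have PX: "P i (g (k + j)) = X i j" if "i < k" "j < l" for i j
    using A[of i "k + j"] that nkl by (simp add: P_def sys_mat_def)
  have Plin: "P i (x - c * y) = P i x - c * P i y" if "\<phi> c = c" for i x y c
    unfolding P_def using that
    by (simp add: hfa(2) hom_funpow[OF add mul one] hfa(5) sum_subtractf sum_distrib_left
        algebra_simps)
  have gind: "\<forall>c. (\<forall>j<k. \<phi> (c j) = c j) \<longrightarrow> (\<Sum>j<k. c j * g j) = 0 \<longrightarrow> (\<forall>j<k. c j = 0)"
  proof (rule allI, (rule impI)+)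
    fix c assume cf: "\<forall>j<k. \<phi> (c j) = c j" and cs: "(\<Sum>j<k. c j * g j) = 0"
    define d where "d t = (if t < k then c t else 0)" for t
    have "\<forall>j<n. d j \<in> subfield_q q" using cf hb(1) by (auto simp: d_def simp flip: fix_iff)
    moreover have "(\<Sum>j<n. d j * g j) = 0"
    proof -
      have "(\<Sum>j<n. d j * g j) = (\<Sum>t<n. if t < k then c t * g t else 0)"
        by (intro sum.cong) (auto simp: d_def)
      then show ?thesis using cs sum_if_less[of k n "\<lambda>t. c t * g t"] kn by simp
    qed
    ultimately have "\<forall>j<n. d j = 0" using gi unfolding lin_indep_Fq_def by blast
    then show "\<forall>j<k. c j = 0" using kn by (auto simp: d_def split: if_splits)
  qed
  have notF: "\<phi> (X i j) \<noteq> X i j" if ij: "i < k" "j < l" for i j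
  proof
    assume cfix: "\<phi> (X i j) = X i j"
    define c where "c = X i j"
    define h where "h t = (if t = i then g (k + j) - c * g i else g t)" for t
    have hind: "\<forall>cc. (\<forall>t<k. \<phi> (cc t) = cc t) \<longrightarrow> (\<Sum>t<k. cc t * h t) = 0 \<longrightarrow> (\<forall>t<k. cc t = 0)"
    proof (rule allI, (rule impI)+)
      fix cc assume cf: "\<forall>t<k. \<phi> (cc t) = cc t" and cs: "(\<Sum>t<k. cc t * h t) = 0"
      define d where "d t = (if t < k then (if t = i then - (cc i * c) else cc t)
                              else if t = k + j then cc i else 0)" for t
      have "\<phi> (d t) = d t" for t
        using cf cfix ij hb(1) by (auto simp: d_def c_def hb(2) mul)
      then have "\<forall>t<n. d t \<in> subfield_q q" using fix_iff by blast
      moreover have "(\<Sum>t<n. d t * g t) = 0"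
      proof -
        have fin: "finite {..<n}" by simp
        have iin: "i \<in> {..<n}" using ij kn by simp
        have kjin: "k + j \<in> {..<n} - {i}" using ij nkl by simp
        have s1: "(\<Sum>t<n. d t * g t) = d i * g i + (d (k+j) * g (k+j) + (\<Sum>t\<in>{..<n} - {i} - {k+j}. d t * g t))"
          using sum.remove[OF fin iin, of "\<lambda>t. d t * g t"] sum.remove[of "{..<n} - {i}" "k+j" "\<lambda>t. d t * g t"] kjin by simp
        have s2: "(\<Sum>t\<in>{..<n} - {i} - {k+j}. d t * g t) = (\<Sum>t\<in>{..<k} - {i}. cc t * g t)"
        proof (rule sum.mono_neutral_cong_right)
          show "{..<k} - {i} \<subseteq> {..<n} - {i} - {k + j}" using kn by auto
          show "\<forall>t\<in>{..<n} - {i} - {k + j} - ({..<k} - {i}). d t * g t = 0"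
            by (auto simp: d_def)
          show "\<And>t. t \<in> {..<k} - {i} \<Longrightarrow> d t * g t = cc t * g t" by (auto simp: d_def)
        qed simp
        have s3: "(\<Sum>t<k. cc t * h t) = cc i * h i + (\<Sum>t\<in>{..<k} - {i}. cc t * h t)"
          using sum.remove[of "{..<k}" i "\<lambda>t. cc t * h t"] ij by simp
        have s4: "(\<Sum>t\<in>{..<k} - {i}. cc t * h t) = (\<Sum>t\<in>{..<k} - {i}. cc t * g t)"
          by (intro sum.cong refl) (auto simp: h_def)
        have v1: "d i = - (cc i * c)" "d (k+j) = cc i" "h i = g (k + j) - c * g i"
          using ij by (auto simp: d_def h_def)
        have "(\<Sum>t<n. d t * g t) = (\<Sum>t<k. cc t * h t)"
          unfolding s1 s2 s3 s4 v1 by (simp add: algebra_simps)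
        then show ?thesis using cs by simp
      qed
      ultimately have dz: "\<forall>t<n. d t = 0" using gi unfolding lin_indep_Fq_def by blast
      have ci: "cc i = 0" using dz[rule_format, of "k + j"] ij nkl by (simp add: d_def)
      show "\<forall>t<k. cc t = 0"
      proof (intro allI impI)
        fix t assume "t < k"
        show "cc t = 0"
        proof (cases "t = i")
          case True then show ?thesis using ci by simp
        next
          case False then show ?thesis using dz[rule_format, of t] \<open>t < k\<close> kn by (simp add: d_def)
        qed
      qed
    qed
    have hvan: "\<forall>t<k. (\<Sum>t'<k. A i t' * (\<phi>^^t') (h t)) = 0"
    proof (intro allI impI)
      fix t assume "t < k"
      show "(\<Sum>t'<k. A i t' * (\<phi>^^t') (h t)) = 0"
      proof (cases "t = i")
        case True
        have "P i (h t) = P i (g (k + j)) - c * P i (g i)"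
          using True Plin[of c i "g (k+j)" "g i"] cfix by (simp add: h_def c_def)
        then show ?thesis using PX[OF ij] Pdiag[of i i] ij by (simp add: P_def c_def)
      next
        case False
        then show ?thesis using Pdiag[of i t] ij \<open>t < k\<close> by (simp add: P_def h_def)
      qed
    qed
    have "\<forall>t<k. A i t = 0" using skew_indep[OF add mul one hind hvan] .
    then have "P i (g i) = 0" by (simp add: P_def)
    then show False using Pdiag[of i i] ij by simp
  qed
  define B where "B i t = (if 0 < t then \<phi> (A i (t - 1)) else 0) - (if t < k then A i t else 0)" for i t
  have Qrep: "\<phi> (P i x) - P i x = (\<Sum>t<Suc k. B i t * (\<phi>^^t) x)" for i x
  proof -
    have a1: "\<phi> (P i x) = (\<Sum>t<k. \<phi> (A i t) * (\<phi>^^Suc t) x)"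
      unfolding P_def hb(4) by (simp add: mul)
    have a2: "(\<Sum>t<Suc k. (if 0 < t then \<phi> (A i (t - 1)) else 0) * (\<phi>^^t) x) = (\<Sum>t<k. \<phi> (A i t) * (\<phi>^^Suc t) x)"
      by (simp add: sum.lessThan_Suc_shift del: sum.lessThan_Suc)
    have a3: "(\<Sum>t<Suc k. (if t < k then A i t else 0) * (\<phi>^^t) x) = P i x"
    proof -
      have "(\<Sum>t<Suc k. (if t < k then A i t else 0) * (\<phi>^^t) x) = (\<Sum>t<k. (if t < k then A i t else 0) * (\<phi>^^t) x)"
        by simp
      also have "\<dots> = P i x" unfolding P_def by (intro sum.cong refl) simp
      finally show ?thesis .
    qed
    have "(\<Sum>t<Suc k. B i t * (\<phi>^^t) x) = (\<Sum>t<Suc k. (if 0 < t then \<phi> (A i (t - 1)) else 0) * (\<phi>^^t) x)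
        - (\<Sum>t<Suc k. (if t < k then A i t else 0) * (\<phi>^^t) x)"
      unfolding B_def by (simp only: left_diff_distrib sum_subtractf)
    then show ?thesis using a1 a2 a3 by simp
  qed
  have Bk: "B i k = \<phi> (A i (k - 1))" for i using k1 by (simp add: B_def)
  have Qz: "(\<Sum>t<Suc k. B i t * (\<phi>^^t) (g t')) = 0" if "i < k" "t' < k" for i t'
    using Qrep[of i "g t'"] Pdiag[OF that] one hb(1) by (simp split: if_splits)
  have QD: "(\<Sum>t<Suc k. B i t * (\<phi>^^t) (g (k + j))) = \<phi> (X i j) - X i j" if "i < k" "j < l" for i j
    using Qrep[of i "g (k + j)"] PX[OF that] by simp
  have Cz: "(\<Sum>t<Suc k. r t * (\<phi>^^t) x) = 0"
    if rk: "r k = 0" and rv: "\<forall>t'<k. (\<Sum>t<Suc k. r t * (\<phi>^^t) (g t')) = 0" for r x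
  proof -
    have rv': "\<forall>t'<k. (\<Sum>t<k. r t * (\<phi>^^t) (g t')) = 0" using rv rk by simp
    have "\<forall>t<k. r t = 0" using skew_indep[OF add mul one gind rv'] .
    then show ?thesis using rk by simp
  qed
  define D where "D = (\<lambda>i j. X i j ^ q ^ s - X i j)"
  have Dphi: "D i j = \<phi> (X i j) - X i j" for i j by (simp add: D_def \<phi>_def)
  define S where "S = {card I | I. I \<subseteq> {..<k} \<and> rows_indep D l I}"
  have Sle: "x \<le> 1" if "x \<in> S" for x
  proof -
    obtain I where I: "x = card I" "I \<subseteq> {..<k}" "rows_indep D l I" using \<open>x \<in> S\<close> unfolding S_def by blast
    have fI: "finite I" using I(2) finite_subset by blast
    have "card I \<le> Suc 0"
    proof (rule ccontr)
      assume "\<not> card I \<le> Suc 0"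
      then obtain i1 i2 where i12: "i1 \<in> I" "i2 \<in> I" "i1 \<noteq> i2" using card_le_Suc0_iff_eq[OF fI] by blast
      have ik: "i1 < k" "i2 < k" using i12 I(2) by auto
      define \<beta>1 where "\<beta>1 = B i1 k"
      define \<beta>2 where "\<beta>2 = B i2 k"
      define r where "r t = \<beta>2 * B i1 t - \<beta>1 * B i2 t" for t
      have Rx: "(\<Sum>t<Suc k. r t * (\<phi>^^t) x) = \<beta>2 * (\<Sum>t<Suc k. B i1 t * (\<phi>^^t) x) - \<beta>1 * (\<Sum>t<Suc k. B i2 t * (\<phi>^^t) x)" for x
        unfolding r_def by (simp add: left_diff_distrib sum_subtractf sum_distrib_left mult.assoc del: sum.lessThan_Suc)
      have rk: "r k = 0" by (simp add: r_def \<beta>1_def \<beta>2_def)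
      have "\<forall>t'<k. (\<Sum>t<Suc k. r t * (\<phi>^^t) (g t')) = 0"
        using Rx Qz ik by simp
      then have R0: "(\<Sum>t<Suc k. r t * (\<phi>^^t) x) = 0" for x using Cz[of r, OF rk] by blast
      have rel: "\<beta>2 * D i1 j - \<beta>1 * D i2 j = 0" if "j < l" for j
        using R0[of "g (k + j)"] Rx[of "g (k + j)"] QD[OF ik(1) that] QD[OF ik(2) that] by (simp add: Dphi)
      define \<alpha> where "\<alpha> i = (if i = i1 then \<beta>2 else if i = i2 then - \<beta>1 else 0)" for i
      have "(\<Sum>i\<in>I. \<alpha> i * D i j) = \<beta>2 * D i1 j - \<beta>1 * D i2 j" for j
      proof -
        have "(\<Sum>i\<in>I. \<alpha> i * D i j) = (\<Sum>i\<in>I. (if i = i1 then \<beta>2 * D i1 j else 0) + (if i = i2 then - \<beta>1 * D i2 j else 0))"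
          by (intro sum.cong refl) (use i12 in \<open>auto simp: \<alpha>_def\<close>)
        also have "\<dots> = \<beta>2 * D i1 j - \<beta>1 * D i2 j"
          using fI i12 by (simp add: sum.distrib sum.delta')
        finally show ?thesis .
      qed
      then have "\<forall>i\<in>I. \<alpha> i = 0" using I(3) rel unfolding rows_indep_def by simp
      then have b0: "\<beta>2 = 0" "\<beta>1 = 0" using i12 by (auto simp: \<alpha>_def)
      have Qv: "\<forall>t'<k. (\<Sum>t<Suc k. B i1 t * (\<phi>^^t) (g t')) = 0" using Qz ik by simp
      have Bk0: "B i1 k = 0" using b0(2) by (simp add: \<beta>1_def)
      have Q0: "(\<Sum>t<Suc k. B i1 t * (\<phi>^^t) x) = 0" for x by (rule Cz[OF Bk0 Qv])
      have Dz: "D i1 j = 0" if "j < l" for j using Q0[of "g (k + j)"] QD[OF ik(1) that] by (simp add: Dphi)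
      define \<gamma> where "\<gamma> i = (if i = i1 then (1::'a) else 0)" for i
      have "(\<Sum>i\<in>I. \<gamma> i * D i j) = 0" if "j < l" for j
      proof -
        have "(\<Sum>i\<in>I. \<gamma> i * D i j) = (\<Sum>i\<in>I. if i = i1 then D i1 j else 0)"
          by (intro sum.cong refl) (auto simp: \<gamma>_def)
        also have "\<dots> = D i1 j" using fI i12 by (simp add: sum.delta')
        finally show ?thesis using Dz[OF that] by simp
      qed
      then have "\<forall>i\<in>I. \<gamma> i = 0" using I(3) unfolding rows_indep_def by blast
      then show False using i12 by (auto simp: \<gamma>_def)
    qed
    then show ?thesis using I(1) by simp
  qed
  have S1: "1 \<in> S"
  proof -
    have k0: "0 < k" and l0: "0 < l" using k1 l1 by auto
    have D00: "D 0 0 \<noteq> 0" using notF[OF k0 l0] by (simp add: Dphi)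
    have "rows_indep D l {0}" unfolding rows_indep_def using D00 l0 by auto
    then show ?thesis unfolding S_def using k0 by (intro CollectI exI[of _ "{0}"]) auto
  qed
  have fS: "finite S"
  proof -
    have "S \<subseteq> card ` Pow {..<k}" unfolding S_def by auto
    then show ?thesis by (rule finite_subset) simp
  qed
  have rank: "mat_rank D k l = 1"
    unfolding mat_rank_def S_def[symmetric] by (rule Max_eqI[OF fS Sle S1])
  have entries: "\<forall>i<k. \<forall>j<l. X i j \<notin> subfield_q q"
    using notF fix_iff by blast
  show ?thesis
    unfolding G_set_def using Xm entries rank by (simp add: l_def D_def)
qed



lemma mats_card:
  "finite (mats k l :: (nat \<Rightarrow> nat \<Rightarrow> 'a::{zero,finite}) set) \<and>
   card (mats k l :: (nat \<Rightarrow> nat \<Rightarrow> 'a) set) = CARD('a) ^ (k * l)"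
proof -
  let ?M = "mats k l :: (nat \<Rightarrow> nat \<Rightarrow> 'a) set"
  let ?P = "PiE ({..<k} \<times> {..<l}) (\<lambda>_. UNIV :: 'a set)"
  define f :: "(nat \<Rightarrow> nat \<Rightarrow> 'a) \<Rightarrow> (nat \<times> nat \<Rightarrow> 'a)" where
    "f X = restrict (\<lambda>(i, j). X i j) ({..<k} \<times> {..<l})" for X
  define h :: "(nat \<times> nat \<Rightarrow> 'a) \<Rightarrow> (nat \<Rightarrow> nat \<Rightarrow> 'a)" where
    "h Y = (\<lambda>i j. if i < k \<and> j < l then Y (i, j) else 0)" for Y
  have bij: "bij_betw f ?M ?P"
  proof (rule bij_betw_byWitness[where f' = h])
    show "\<forall>a\<in>?M. h (f a) = a"
      by (auto simp: mats_def f_def h_def fun_eq_iff)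
    show "\<forall>a'\<in>?P. f (h a') = a'"
      by (auto simp: f_def h_def fun_eq_iff PiE_def extensional_def)
    show "f ` ?M \<subseteq> ?P" unfolding f_def by (intro image_subsetI) (simp only: restrict_PiE_iff, simp)
    show "h ` ?P \<subseteq> ?M" by (auto simp: h_def mats_def)
  qed
  have fP: "finite ?P" by (rule finite_PiE) auto
  have cP: "card ?P = CARD('a) ^ (k * l)"
    by (simp add: card_PiE card_cartesian_product)
  show ?thesis using bij fP cP bij_betw_finite bij_betw_same_card by metis
qed

theorem lemma4p7:
  fixes q m k n :: nat
  assumes "\<exists>p e. prime p \<and> 0 < e \<and> q = p ^ e"
    and "CARD('a::{field,finite}) = q ^ m"
    and "2 \<le> m" and "1 \<le> k" and "k < n"
  shows "measure_pmf.prob (pmf_of_set (mats k (n - k) :: (nat \<Rightarrow> nat \<Rightarrow> 'a) set))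
            {X. is_gen_gabidulin q m k n (row_space (sys_mat k n X) k n)}
         \<le> (\<Sum>s | 0 < s \<and> s < m \<and> coprime s m.
              measure_pmf.prob (pmf_of_set (mats k (n - k) :: (nat \<Rightarrow> nat \<Rightarrow> 'a) set))
                (G_set q k (n - k) s))
       \<and> (\<Sum>s | 0 < s \<and> s < m \<and> coprime s m.
              measure_pmf.prob (pmf_of_set (mats k (n - k) :: (nat \<Rightarrow> nat \<Rightarrow> 'a) set))
                (G_set q k (n - k) s))
         = (\<Sum>s | 0 < s \<and> s < m \<and> coprime s m.
              real (card (G_set q k (n - k) s :: (nat \<Rightarrow> nat \<Rightarrow> 'a) set)) / real q ^ (m * k * (n - k)))"
proof -
  obtain p e where pe: "prime p" "0 < e" "q = p ^ e" using assms(1) by blast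
  define M where "M = (mats k (n - k) :: (nat \<Rightarrow> nat \<Rightarrow> 'a) set)"
  have fM: "finite M" and cM: "card M = CARD('a) ^ (k * (n - k))"
    using mats_card[where k = k and l = "n - k", where 'a = 'a] by (simp_all add: M_def)
  have neM: "M \<noteq> {}"
  proof -
    have "(\<lambda>i j. 0) \<in> M" by (simp add: M_def mats_def)
    then show ?thesis by blast
  qed
  have cMpos: "0 < card M" using fM neM by (simp add: card_gt_0_iff)
  have prob: "measure_pmf.prob (pmf_of_set M) A = real (card (M \<inter> A)) / real (card M)" for A
    by (rule measure_pmf_of_set[OF neM fM])
  define Ss where "Ss = {s. 0 < s \<and> s < m \<and> coprime s m}"
  have fSs: "finite Ss" unfolding Ss_def by (rule finite_subset[of _ "{..<m}"]) auto
  have Gsub: "G_set q k (n - k) s \<subseteq> M" for s by (auto simp: G_set_def M_def)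
  have probG: "measure_pmf.prob (pmf_of_set M) (G_set q k (n - k) s) = real (card (G_set q k (n - k) s :: (nat \<Rightarrow> nat \<Rightarrow> 'a) set)) / real (card M)" for s
    using prob Gsub[of s] by (simp add: Int_absorb1)
  let ?Gab = "{X. is_gen_gabidulin q m k n (row_space (sys_mat k n X) k n)}"
  have sub: "M \<inter> ?Gab \<subseteq> (\<Union>s\<in>Ss. (G_set q k (n - k) s :: (nat \<Rightarrow> nat \<Rightarrow> 'a) set))"
  proof
    fix X assume "X \<in> M \<inter> ?Gab"
    then have XM: "X \<in> mats k (n - k)" and gab: "is_gen_gabidulin q m k n (row_space (sys_mat k n X) k n)"
      by (auto simp: M_def)
    from gab obtain s g where sg: "0 < s" "s < m" "coprime s m" "lin_indep_Fq q n g"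
      "row_space (sys_mat k n X) k n = row_space (gab_mat q s k n g) k n"
      unfolding is_gen_gabidulin_def by blast
    have "X \<in> G_set q k (n - k) s"
      by (rule gab_imp_G[OF pe assms(2) assms(4) assms(5) XM sg(1) sg(3) sg(4) sg(5)])
    then show "X \<in> (\<Union>s\<in>Ss. (G_set q k (n - k) s :: (nat \<Rightarrow> nat \<Rightarrow> 'a) set))" using sg by (auto simp: Ss_def)
  qed
  have finU: "finite (\<Union>s\<in>Ss. (G_set q k (n - k) s :: (nat \<Rightarrow> nat \<Rightarrow> 'a) set))"
    by (rule finite_subset[OF _ fM]) (use Gsub in blast)
  have "card (M \<inter> ?Gab) \<le> card (\<Union>s\<in>Ss. (G_set q k (n - k) s :: (nat \<Rightarrow> nat \<Rightarrow> 'a) set))"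
    using card_mono[OF finU sub] .
  also have "\<dots> \<le> (\<Sum>s\<in>Ss. card (G_set q k (n - k) s :: (nat \<Rightarrow> nat \<Rightarrow> 'a) set))" by (rule card_UN_le[OF fSs])
  finally have cle: "real (card (M \<inter> ?Gab)) \<le> (\<Sum>s\<in>Ss. real (card (G_set q k (n - k) s :: (nat \<Rightarrow> nat \<Rightarrow> 'a) set)))"
    by (simp flip: of_nat_sum)
  have part1: "measure_pmf.prob (pmf_of_set M) ?Gab \<le> (\<Sum>s\<in>Ss. measure_pmf.prob (pmf_of_set M) (G_set q k (n - k) s))"
  proof -
    have "measure_pmf.prob (pmf_of_set M) ?Gab = real (card (M \<inter> ?Gab)) / real (card M)" by (rule prob)
    also have "\<dots> \<le> (\<Sum>s\<in>Ss. real (card (G_set q k (n - k) s :: (nat \<Rightarrow> nat \<Rightarrow> 'a) set))) / real (card M)"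
      by (rule divide_right_mono[OF cle]) simp
    also have "\<dots> = (\<Sum>s\<in>Ss. measure_pmf.prob (pmf_of_set M) (G_set q k (n - k) s))"
      by (simp add: probG sum_divide_distrib)
    finally show ?thesis .
  qed
  have cMr: "real (card M) = real q ^ (m * k * (n - k))"
    using cM assms(2) by (simp add: power_mult mult.assoc)
  have part2: "(\<Sum>s\<in>Ss. measure_pmf.prob (pmf_of_set M) (G_set q k (n - k) s))
      = (\<Sum>s\<in>Ss. real (card (G_set q k (n - k) s :: (nat \<Rightarrow> nat \<Rightarrow> 'a) set)) / real q ^ (m * k * (n - k)))"
    by (simp add: probG cMr)
  show ?thesis using part1 part2 unfolding M_def Ss_def by simp
qed


end
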